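(* Let $M\ge 2$, $D,Q,K$ positive integers, and let $\varphi:\mathbb{R}^D\times R\to\mathbb{R}^K$ be a function on a parameter set $R$ such that for every $\bm{x}\in\mathbb{R}^D$ there exists $\rho\in R$ with $\varphi(\bm{x};\rho)\neq\bm{0}$. Consider networks $\mathcal{F}=\{F_i\}_{i=1}^M$ with $F_i(\bm{x})=\bm{W}^i\varphi(\bm{x};\rho^i)$, $\bm{W}^i\in\mathbb{R}^{Q\times K}$, $\rho^i\in R$, and a nonempty finite data set $\mathcal{D}=\{(\bm{x}_n,\bm{y}_n)\}_{n=1}^N\subset\mathbb{R}^D\times\mathbb{R}^Q$. Let $$E_\lambda(\mathcal{F},\mathcal{D}) = \frac{1}{N}\sum_{n=1}^N\Big(\frac{1}{M}\sum_{i=1}^M\|F_i(\bm{x}_n)-\bm{y}_n\|^2-\lambda\frac{1}{M}\sum_{i=1}^M\|F_i(\bm{x}_n)-\overline{F}(\bm{x}_n)\|^2\Big),\quad \overline{F}=\tfrac1M\textstyle\sum_i F_i.$$ Fix $i\in\{1,\dots,M\}$ and fix $F_j$ for all $j\neq i$. With infima over all parametrisations $(\bm{W}^i,\rho^i)$ of $F_i$ only: (i) if $\lambda<\frac{M}{M-1}$ then $\inf E_\lambda(\mathcal{F},\mathcal{D})>-\infty$; (ii) if $\lambda>\frac{M}{M-1}$ then $\inf E_\lambda(\mathcal{F},\mathcal{D})=-\infty$.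
   Context: $\|\cdot\|$ is the Euclidean norm. *)

theory Defs
  imports "HOL-Analysis.Analysis"
begin

definition ens_mean :: "nat \<Rightarrow> (nat \<Rightarrow> real^'d \<Rightarrow> real^'q) \<Rightarrow> real^'d \<Rightarrow> real^'q" where
  "ens_mean M F x = (1 / real M) *\<^sub>R (\<Sum>i<M. F i x)"

definition ens_loss :: "real \<Rightarrow> nat \<Rightarrow> (nat \<Rightarrow> real^'d \<Rightarrow> real^'q) \<Rightarrow> nat
    \<Rightarrow> (nat \<Rightarrow> real^'d) \<Rightarrow> (nat \<Rightarrow> real^'q) \<Rightarrow> real" where
  "ens_loss lam M F N xs ys =
     (1 / real N) * (\<Sum>n<N.
        (1 / real M) * (\<Sum>i<M. (norm (F i (xs n) - ys n))\<^sup>2)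
        - lam * ((1 / real M) * (\<Sum>i<M. (norm (F i (xs n) - ens_mean M F (xs n)))\<^sup>2)))"

definition net :: "(real^'d \<Rightarrow> 'r \<Rightarrow> real^'k) \<Rightarrow> (nat \<Rightarrow> real^'k^'q) \<Rightarrow> (nat \<Rightarrow> 'r)
    \<Rightarrow> nat \<Rightarrow> real^'d \<Rightarrow> real^'q" where
  "net \<phi> W \<rho> i x = W i *v \<phi> x (\<rho> i)"

end

theory Submission imports Defs begin

lemma sum_sq_dev:
  fixes G :: "nat \<Rightarrow> 'a::real_inner" assumes "M > 0"
  shows "(\<Sum>j<M. (norm (G j - (1/real M) *\<^sub>R (\<Sum>j<M. G j)))\<^sup>2)
       = (\<Sum>j<M. (norm (G j))\<^sup>2) - (norm (\<Sum>j<M. G j))\<^sup>2 / real M"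
proof -
  define s where "s = (\<Sum>j<M. G j)"
  have "(\<Sum>j<M. (norm (G j - (1/real M) *\<^sub>R s))\<^sup>2)
      = (\<Sum>j<M. (norm (G j))\<^sup>2 - (2/real M) * inner (G j) s + (norm s)\<^sup>2 / (real M)\<^sup>2)"
  proof (rule sum.cong)
    fix j
    have "(norm (G j - (1/real M) *\<^sub>R s))\<^sup>2 = inner (G j) (G j) - 2 * (1/real M) * inner (G j) s + (1/real M)^2 * inner s s"
      unfolding power2_norm_eq_inner by (simp add: inner_diff_left inner_diff_right inner_commute algebra_simps power2_eq_square)
    then show "(norm (G j - (1/real M) *\<^sub>R s))\<^sup>2 = (norm (G j))\<^sup>2 - (2/real M) * inner (G j) s + (norm s)\<^sup>2 / (real M)\<^sup>2"
      by (simp add: power2_norm_eq_inner[symmetric] field_simps)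
  qed simp
  also have "\<dots> = (\<Sum>j<M. (norm (G j))\<^sup>2) - (2/real M) * inner s s + real M * (norm s)\<^sup>2 / (real M)\<^sup>2"
    by (simp add: sum.distrib sum_subtractf sum_distrib_left[symmetric] sum_divide_distrib[symmetric] inner_sum_left s_def)
  also have "\<dots> = (\<Sum>j<M. (norm (G j))\<^sup>2) - (norm s)\<^sup>2 / real M"
    using assms by (simp add: power2_norm_eq_inner[symmetric] field_simps power2_eq_square)
  finally show ?thesis by (simp add: s_def)
qed

lemma term_decomp:
  fixes G :: "nat \<Rightarrow> 'a::real_inner"
  assumes "i < M" "M > 0"
  shows "(1 / real M) * (\<Sum>j<M. (norm (G j - y))\<^sup>2)
        - lam * ((1 / real M) * (\<Sum>j<M. (norm (G j - (1/real M) *\<^sub>R (\<Sum>j<M. G j)))\<^sup>2))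
     = (1/real M - lam/real M + lam/(real M)\<^sup>2) * (norm (G i))\<^sup>2
       - (2/real M) * inner (G i) y + (2*lam/(real M)\<^sup>2) * inner (G i) (\<Sum>j\<in>{..<M}-{i}. G j)
       + ((\<Sum>j\<in>{..<M}-{i}. (norm (G j - y))\<^sup>2) + (norm y)\<^sup>2) / real M
       - lam / real M * ((\<Sum>j\<in>{..<M}-{i}. (norm (G j))\<^sup>2) - (norm (\<Sum>j\<in>{..<M}-{i}. G j))\<^sup>2 / real M)"
proof -
  define a where "a = G i"
  define S where "S = (\<Sum>j\<in>{..<M}-{i}. G j)"
  define A where "A = (\<Sum>j\<in>{..<M}-{i}. (norm (G j - y))\<^sup>2)"
  define T where "T = (\<Sum>j\<in>{..<M}-{i}. (norm (G j))\<^sup>2)"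
  have i: "i \<in> {..<M}" using assms by simp
  have 1: "(\<Sum>j<M. (norm (G j - y))\<^sup>2) = (norm (a - y))\<^sup>2 + A"
    unfolding a_def A_def by (rule sum.remove[OF _ i]) simp
  have 2: "(\<Sum>j<M. (norm (G j))\<^sup>2) = (norm a)\<^sup>2 + T"
    unfolding a_def T_def by (rule sum.remove[OF _ i]) simp
  have 3: "(\<Sum>j<M. G j) = a + S"
    unfolding a_def S_def by (rule sum.remove[OF _ i]) simp
  have 4: "(norm (a - y))\<^sup>2 = (norm a)\<^sup>2 - 2 * inner a y + (norm y)\<^sup>2"
    by (simp add: power2_norm_eq_inner inner_diff_left inner_diff_right inner_commute)
  have 5: "(norm (a + S))\<^sup>2 = (norm a)\<^sup>2 + 2 * inner a S + (norm S)\<^sup>2"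
    by (simp add: power2_norm_eq_inner inner_add_left inner_add_right inner_commute)
  show ?thesis
    unfolding sum_sq_dev[OF assms(2)] unfolding 1 2 3 4 5
    unfolding a_def[symmetric] S_def[symmetric] A_def[symmetric] T_def[symmetric]
    using assms by (simp add: field_simps power2_eq_square)
qed

lemma quad_lower:
  fixes c x B :: real assumes "c > 0"
  shows "c * x\<^sup>2 - B * x \<ge> - B\<^sup>2 / (4 * c)"
proof -
  have "0 \<le> c * (x - B / (2*c))\<^sup>2" using assms by simp
  also have "\<dots> = c * x\<^sup>2 - B * x + B\<^sup>2 / (4 * c)"
    using assms by (simp add: power2_eq_square field_simps)
  finally show ?thesis by simp
qed

lemma quad_upper:
  fixes c x B :: real assumes "c < 0"
  shows "c * x\<^sup>2 + B * x \<le> - B\<^sup>2 / (4 * c)"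
proof -
  have "(-c)*x\<^sup>2 - B*x \<ge> -B\<^sup>2/(4*(-c))" using assms by (intro quad_lower) simp
  moreover have "-B\<^sup>2/(4*(-c)) = B\<^sup>2/(4*c)" by simp
  ultimately show ?thesis by simp
qed

lemma quad_neg:
  fixes c s B d L :: real assumes "c < 0" "s \<ge> 1" "s \<ge> (\<bar>B\<bar> + \<bar>d - L\<bar> + 1) / (-c)"
  shows "c * s\<^sup>2 + B * s + d < L"
proof -
  have "c * s \<le> - (\<bar>B\<bar> + \<bar>d - L\<bar> + 1)"
    using assms by (simp add: field_simps)
  hence h: "c * s + B \<le> - \<bar>d - L\<bar> - 1" by linarith
  hence "s * (c * s + B) \<le> 1 * (c * s + B)"
    using assms(2) by (intro mult_right_mono_neg) auto
  hence "c * s\<^sup>2 + B * s \<le> - \<bar>d - L\<bar> - 1" using h by (simp add: power2_eq_square algebra_simps)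
  thus ?thesis by linarith
qed

theorem theorem6:
  fixes \<phi> :: "real^'d \<Rightarrow> 'r \<Rightarrow> real^'k"
    and R :: "'r set"
    and M N :: nat
    and W :: "nat \<Rightarrow> real^'k^'q"
    and \<rho> :: "nat \<Rightarrow> 'r"
    and xs :: "nat \<Rightarrow> real^'d"
    and ys :: "nat \<Rightarrow> real^'q"
    and i :: nat
    and lam :: real
  assumes M: "M \<ge> 2"
    and N: "N \<ge> 1"
    and nonzero: "\<forall>x. \<exists>r\<in>R. \<phi> x r \<noteq> 0"
    and params: "\<forall>j<M. \<rho> j \<in> R"
    and i: "i < M"
  shows "(lam < real M / (real M - 1) \<longrightarrow>
           (INF (V, r) \<in> UNIV \<times> R.
              ereal (ens_loss lam M (net \<phi> (W(i := V)) (\<rho>(i := r))) N xs ys)) > -\<infinity>)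
       \<and> (lam > real M / (real M - 1) \<longrightarrow>
           (INF (V, r) \<in> UNIV \<times> R.
              ereal (ens_loss lam M (net \<phi> (W(i := V)) (\<rho>(i := r))) N xs ys)) = -\<infinity>)"
proof -
  have M0: "M > 0" using M by simp
  define F where "F V r = net \<phi> (W(i := V)) (\<rho>(i := r))" for V r
  define trm where "trm V r n = (1 / real M) * (\<Sum>j<M. (norm (F V r j (xs n) - ys n))\<^sup>2)
        - lam * ((1 / real M) * (\<Sum>j<M. (norm (F V r j (xs n) - ens_mean M (F V r) (xs n)))\<^sup>2))"
    for V r n
  have loss: "ens_loss lam M (F V r) N xs ys = (1 / real N) * (\<Sum>n<N. trm V r n)" for V r
    unfolding ens_loss_def trm_def by simp
  define c where "c = 1/real M - lam/real M + lam/(real M)\<^sup>2"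
  define S where "S n = (\<Sum>j\<in>{..<M}-{i}. net \<phi> W \<rho> j (xs n))" for n
  define d where "d n = ((\<Sum>j\<in>{..<M}-{i}. (norm (net \<phi> W \<rho> j (xs n) - ys n))\<^sup>2) + (norm (ys n))\<^sup>2) / real M
       - lam / real M * ((\<Sum>j\<in>{..<M}-{i}. (norm (net \<phi> W \<rho> j (xs n)))\<^sup>2) - (norm (S n))\<^sup>2 / real M)" for n
  define B where "B n = 2 / real M * norm (ys n) + 2 * \<bar>lam\<bar> / (real M)\<^sup>2 * norm (S n)" for n
  have decomp: "trm V r n = c * (norm (V *v \<phi> (xs n) r))\<^sup>2
      - (2/real M) * inner (V *v \<phi> (xs n) r) (ys n)
      + (2*lam/(real M)\<^sup>2) * inner (V *v \<phi> (xs n) r) (S n) + d n" for V r n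
  proof -
    have Fo: "F V r j (xs n) = net \<phi> W \<rho> j (xs n)" if "j \<in> {..<M}-{i}" for j
      using that by (simp add: F_def net_def)
    have Fi: "F V r i (xs n) = V *v \<phi> (xs n) r" by (simp add: F_def net_def)
    have e: "ens_mean M (F V r) (xs n) = (1/real M) *\<^sub>R (\<Sum>j<M. F V r j (xs n))"
      by (simp add: ens_mean_def)
    have s1: "(\<Sum>j\<in>{..<M}-{i}. F V r j (xs n)) = S n"
      unfolding S_def by (rule sum.cong[OF refl Fo])
    have s2: "(\<Sum>j\<in>{..<M}-{i}. (norm (F V r j (xs n) - ys n))\<^sup>2) = (\<Sum>j\<in>{..<M}-{i}. (norm (net \<phi> W \<rho> j (xs n) - ys n))\<^sup>2)"
      by (rule sum.cong[OF refl]) (simp add: Fo)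
    have s3: "(\<Sum>j\<in>{..<M}-{i}. (norm (F V r j (xs n)))\<^sup>2) = (\<Sum>j\<in>{..<M}-{i}. (norm (net \<phi> W \<rho> j (xs n)))\<^sup>2)"
      by (rule sum.cong[OF refl]) (simp add: Fo)
    show ?thesis
      unfolding trm_def e term_decomp[OF i M0, of "\<lambda>j. F V r j (xs n)"] s1 s2 s3 Fi
      by (simp add: c_def d_def)
  qed
  have bnd: "\<bar>trm V r n - c * (norm (V *v \<phi> (xs n) r))\<^sup>2 - d n\<bar> \<le> B n * norm (V *v \<phi> (xs n) r)" for V r n
  proof -
    define a where "a = V *v \<phi> (xs n) r"
    have f1: "\<bar>(2/real M) * inner a (ys n)\<bar> \<le> 2 / real M * (norm a * norm (ys n))"
      using Cauchy_Schwarz_ineq2[of a "ys n"] by (simp add: abs_mult divide_right_mono)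
    moreover have f2: "\<bar>(2*lam/(real M)\<^sup>2) * inner a (S n)\<bar> \<le> 2 * \<bar>lam\<bar> / (real M)\<^sup>2 * (norm a * norm (S n))"
      using Cauchy_Schwarz_ineq2[of a "S n"] by (simp add: abs_mult mult_left_mono divide_right_mono)
 moreover have eq: "trm V r n - c * (norm a)\<^sup>2 - d n = (2*lam/(real M)\<^sup>2) * inner a (S n) - (2/real M) * inner a (ys n)"
      unfolding decomp a_def by simp
    moreover have Bn: "B n * norm a = 2 / real M * (norm a * norm (ys n)) + 2 * \<bar>lam\<bar> / (real M)\<^sup>2 * (norm a * norm (S n))"
      unfolding B_def by (simp add: algebra_simps)
    ultimately show ?thesis unfolding a_def[symmetric] eq Bn
      using order_trans[OF abs_triangle_ineq4[of "(2*lam/(real M)\<^sup>2) * inner a (S n)" "(2/real M) * inner a (ys n)"] add_mono[OF f2 f1]]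
      by linarith
  qed
  have Mpos: "real M - 1 > 0" using M by simp
  have cform: "c = (real M - lam * (real M - 1)) / (real M)\<^sup>2"
    unfolding c_def using M0 by (simp add: field_simps power2_eq_square)
  show ?thesis
  proof (intro conjI impI)
    assume "lam < real M / (real M - 1)"
    hence "lam * (real M - 1) < real M" using Mpos by (simp add: field_simps)
    hence cpos: "c > 0" unfolding cform using M0 by simp
    define Lb where "Lb = (1/real N) * (\<Sum>n<N. d n - (B n)\<^sup>2 / (4*c))"
    have "ereal Lb \<le> (INF (V, r) \<in> UNIV \<times> R. ereal (ens_loss lam M (F V r) N xs ys))"
    proof (rule INF_greatest, clarify)
      fix V r
      have "trm V r n \<ge> d n - (B n)\<^sup>2 / (4*c)" for n
      proof -
        have "trm V r n \<ge> c * (norm (V *v \<phi> (xs n) r))\<^sup>2 + d n - B n * norm (V *v \<phi> (xs n) r)"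
          using bnd[of V r n] by linarith
        moreover have "c * (norm (V *v \<phi> (xs n) r))\<^sup>2 - B n * norm (V *v \<phi> (xs n) r) \<ge> - (B n)\<^sup>2 / (4*c)"
          by (rule quad_lower[OF cpos])
        ultimately show ?thesis by linarith
      qed
      hence "(\<Sum>n<N. d n - (B n)\<^sup>2 / (4*c)) \<le> (\<Sum>n<N. trm V r n)" by (intro sum_mono) auto
      thus "ereal Lb \<le> ereal (ens_loss lam M (F V r) N xs ys)"
        unfolding loss Lb_def using N by (simp add: divide_right_mono)
    qed
    moreover have "-\<infinity> < ereal Lb" by simp
    ultimately have "-\<infinity> < (INF (V, r) \<in> UNIV \<times> R. ereal (ens_loss lam M (F V r) N xs ys))"
      by (rule order.strict_trans2[rotated])
    thus "(INF (V, r) \<in> UNIV \<times> R. ereal (ens_loss lam M (net \<phi> (W(i := V)) (\<rho>(i := r))) N xs ys)) > -\<infinity>"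
      unfolding F_def .
  next
    assume "lam > real M / (real M - 1)"
    hence "lam * (real M - 1) > real M" using Mpos by (simp add: field_simps)
    hence cneg: "c < 0" unfolding cform using M0 by (simp add: divide_neg_pos)
    define I where "I = (INF (V, r) \<in> UNIV \<times> R. ereal (ens_loss lam M (F V r) N xs ys))"
    obtain r0 where r0: "r0 \<in> R" "\<phi> (xs 0) r0 \<noteq> 0" using nonzero by blast
    define u where "u = \<phi> (xs 0) r0"
    define V1 :: "real^'k^'q" where "V1 = (\<chi> q. u)"
    define K where "K = norm (V1 *v u)"
    have "(V1 *v u) $ q = inner u u" for q
      by (simp add: V1_def matrix_vector_mult_def inner_vec_def)
    moreover have "inner u u > 0" using r0 u_def by simp
    ultimately have "V1 *v u \<noteq> 0" by (metis less_irrefl zero_index)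
    hence Kpos: "K > 0" unfolding K_def by simp
    have small: "I \<le> ereal L" for L
    proof -
      define U where "U n = d n - (B n)\<^sup>2 / (4*c)" for n
      define L' where "L' = real N * L - (\<Sum>n\<in>{..<N}-{0}. U n)"
      define s where "s = max 1 ((\<bar>B 0\<bar> + \<bar>d 0 - L'\<bar> + 1) / (-c))"
      define t where "t = s / K"
      have na: "norm ((t *\<^sub>R V1) *v \<phi> (xs 0) r0) = s"
        using Kpos unfolding t_def u_def[symmetric] scaleR_matrix_vector_assoc[symmetric] K_def
        by (simp add: s_def)
      have "trm (t *\<^sub>R V1) r0 0 \<le> c * s\<^sup>2 + B 0 * s + d 0"
        using bnd[of "t *\<^sub>R V1" r0 0] unfolding na by linarith
      also have "\<dots> < L'" by (rule quad_neg[OF cneg]) (auto simp: s_def)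
      finally have t0: "trm (t *\<^sub>R V1) r0 0 < L'" .
      have tn: "trm (t *\<^sub>R V1) r0 n \<le> U n" for n
      proof -
        have "trm (t *\<^sub>R V1) r0 n \<le> c * (norm ((t *\<^sub>R V1) *v \<phi> (xs n) r0))\<^sup>2 + B n * norm ((t *\<^sub>R V1) *v \<phi> (xs n) r0) + d n"
          using bnd[of "t *\<^sub>R V1" r0 n] by linarith
        also have "\<dots> \<le> U n" using quad_upper[OF cneg, of "norm ((t *\<^sub>R V1) *v \<phi> (xs n) r0)" "B n"] unfolding U_def by linarith
        finally show ?thesis .
      qed
      have "(\<Sum>n<N. trm (t *\<^sub>R V1) r0 n) = trm (t *\<^sub>R V1) r0 0 + (\<Sum>n\<in>{..<N}-{0}. trm (t *\<^sub>R V1) r0 n)"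
        using N by (intro sum.remove) auto
      also have "\<dots> < L' + (\<Sum>n\<in>{..<N}-{0}. U n)"
        using t0 sum_mono[of "{..<N}-{0}" "\<lambda>n. trm (t *\<^sub>R V1) r0 n" U, OF tn] by linarith
      finally have "(\<Sum>n<N. trm (t *\<^sub>R V1) r0 n) < real N * L" unfolding L'_def by simp
      hence "ens_loss lam M (F (t *\<^sub>R V1) r0) N xs ys < L"
        unfolding loss using N by (simp add: field_simps)
      hence "I \<le> ereal (ens_loss lam M (F (t *\<^sub>R V1) r0) N xs ys)"
        unfolding I_def using r0(1) by (intro INF_lower2[of "(t *\<^sub>R V1, r0)"]) auto
      moreover have "ereal (ens_loss lam M (F (t *\<^sub>R V1) r0) N xs ys) \<le> ereal L"
        using \<open>ens_loss lam M (F (t *\<^sub>R V1) r0) N xs ys < L\<close> by simp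
      ultimately show ?thesis by (rule order_trans)
    qed
    have "I = -\<infinity>"
    proof (cases I)
      case (real x) with small[of "x - 1"] show ?thesis by simp
    next
      case PInf with small[of 0] show ?thesis by simp
    qed simp
    thus "(INF (V, r) \<in> UNIV \<times> R. ereal (ens_loss lam M (net \<phi> (W(i := V)) (\<rho>(i := r))) N xs ys)) = -\<infinity>"
      unfolding I_def F_def .
  qed
qed

end
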